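(* Let $\mathcal{D}$ be a distribution on $\mathbb{S}^{d-1}$ for which there exist $C,C'>0$ with $C\mu(A)\le\mathcal{D}(A)\le C'\mu(A)$ for all measurable $A\subseteq\mathbb{S}^{d-1}$, where $\mu$ is the uniform (Haar) probability measure. There exist constants $\beta,\gamma>0$, depending only on $d$ and on $C,C'$, such that for all $\mathbf{x}^{(1)},\mathbf{x}^{(2)}\in\mathbb{S}^{d-1}$ with $\langle\mathbf{x}^{(1)},\mathbf{x}^{(2)}\rangle\ge0$, a random $\xi\sim\mathcal{D}$ satisfies both (1) $\mathrm{sgn}(\langle\mathbf{x}^{(1)},\xi\rangle)=\mathrm{sgn}(\langle\mathbf{x}^{(2)},\xi\rangle)$, and (2) $|\langle\mathbf{x}^{(i)},\xi\rangle|\ge\gamma$ for $i=1,2$, with probability at least $\beta$.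
   Context: $\mathbb{S}^{d-1}$ is the unit sphere in $\mathbb{R}^d$; $\mathrm{sgn}(0)=0$. *)

theory Defs
  imports "HOL-Probability.Probability"
begin

definition sphere_cone :: "'a::real_normed_vector set \<Rightarrow> 'a set" where
  "sphere_cone A = {t *\<^sub>R x | t x. 0 < t \<and> t \<le> 1 \<and> x \<in> A}"

text \<open>Uniform (normalised surface / Haar) probability measure of a subset of the unit sphere,
  via the cone construction: mu(A) = vol(cone A) / vol(unit ball).\<close>
definition unif_sphere :: "'a::euclidean_space set \<Rightarrow> real" where
  "unif_sphere A = measure lborel (sphere_cone A) / measure lborel (ball (0::'a) 1)"

definition bounded_sphere_distr :: "real \<Rightarrow> real \<Rightarrow> 'a::euclidean_space measure \<Rightarrow> bool" where
  "bounded_sphere_distr C C' D \<longleftrightarrow>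
     prob_space D \<and> space D = sphere 0 1 \<and>
     sets D = sets (restrict_space borel (sphere (0::'a) 1)) \<and>
     (\<forall>A\<in>sets D. C * unif_sphere A \<le> measure D A \<and> measure D A \<le> C' * unif_sphere A)"

end

theory Submission
  imports Defs
begin

lemma cone_eq:
  fixes x1 x2 :: "'a::euclidean_space" and g :: real
  assumes "g > 0"
  shows "sphere_cone {\<xi> \<in> sphere 0 1. sgn (x1 \<bullet> \<xi>) = sgn (x2 \<bullet> \<xi>) \<and> \<bar>x1 \<bullet> \<xi>\<bar> \<ge> g \<and> \<bar>x2 \<bullet> \<xi>\<bar> \<ge> g}
       = {y. y \<noteq> 0 \<and> norm y \<le> 1 \<and> sgn (x1 \<bullet> y) = sgn (x2 \<bullet> y) \<and> \<bar>x1 \<bullet> y\<bar> \<ge> g * norm y \<and> \<bar>x2 \<bullet> y\<bar> \<ge> g * norm y}"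
    (is "?L = ?R")
proof
  show "?L \<subseteq> ?R"
  proof
    fix y assume "y \<in> ?L"
    then obtain t \<xi> where y: "y = t *\<^sub>R \<xi>" "0 < t" "t \<le> 1" and \<xi>: "norm \<xi> = 1"
      "sgn (x1 \<bullet> \<xi>) = sgn (x2 \<bullet> \<xi>)" "\<bar>x1 \<bullet> \<xi>\<bar> \<ge> g" "\<bar>x2 \<bullet> \<xi>\<bar> \<ge> g"
      unfolding sphere_cone_def by auto
    have n: "norm y = t" using y \<xi> by simp
    have "\<bar>x1 \<bullet> y\<bar> = t * \<bar>x1 \<bullet> \<xi>\<bar>" "\<bar>x2 \<bullet> y\<bar> = t * \<bar>x2 \<bullet> \<xi>\<bar>"
      using y by (auto simp: abs_mult)
    moreover have "sgn (x1 \<bullet> y) = sgn (x2 \<bullet> y)" using y \<xi> by (simp add: sgn_mult)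
    ultimately show "y \<in> ?R" using y \<xi> n \<open>g > 0\<close>
      by (auto simp: mult_left_mono mult.commute)
  qed
next
  show "?R \<subseteq> ?L"
  proof
    fix y assume "y \<in> ?R"
    hence y: "y \<noteq> 0" "norm y \<le> 1" "sgn (x1 \<bullet> y) = sgn (x2 \<bullet> y)"
      "\<bar>x1 \<bullet> y\<bar> \<ge> g * norm y" "\<bar>x2 \<bullet> y\<bar> \<ge> g * norm y" by auto
    define \<xi> where "\<xi> = y /\<^sub>R norm y"
    have np: "norm y > 0" using y by simp
    have e: "y = norm y *\<^sub>R \<xi>" using np by (simp add: \<xi>_def)
    have "norm \<xi> = 1" using np by (simp add: \<xi>_def)
    moreover have "x1 \<bullet> \<xi> = (x1 \<bullet> y) / norm y" "x2 \<bullet> \<xi> = (x2 \<bullet> y) / norm y"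
      by (simp_all add: \<xi>_def divide_inverse mult.commute)
    moreover have "\<bar>(x1 \<bullet> y) / norm y\<bar> \<ge> g" "\<bar>(x2 \<bullet> y) / norm y\<bar> \<ge> g"
      using y np by (simp_all add: pos_le_divide_eq)
    moreover have "sgn ((x1 \<bullet> y) / norm y) = sgn ((x2 \<bullet> y) / norm y)"
      using y np by (simp add: sgn_divide)
    ultimately have "\<xi> \<in> {\<xi> \<in> sphere 0 1. sgn (x1 \<bullet> \<xi>) = sgn (x2 \<bullet> \<xi>) \<and> \<bar>x1 \<bullet> \<xi>\<bar> \<ge> g \<and> \<bar>x2 \<bullet> \<xi>\<bar> \<ge> g}"
      by simp
    thus "y \<in> ?L" unfolding sphere_cone_def using e np y(2) by blast
  qed
qed

lemma ball_sub:
  fixes x1 x2 :: "'a::euclidean_space"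
  assumes "norm x1 = 1" "norm x2 = 1" "x1 \<bullet> x2 \<ge> 0"
  defines "v \<equiv> (x1 + x2) /\<^sub>R (2 * norm (x1 + x2))"
  shows "ball v (1/8) \<subseteq> {y. y \<noteq> 0 \<and> norm y \<le> 1 \<and> sgn (x1 \<bullet> y) = sgn (x2 \<bullet> y) \<and> \<bar>x1 \<bullet> y\<bar> \<ge> (1/5) * norm y \<and> \<bar>x2 \<bullet> y\<bar> \<ge> (1/5) * norm y}"
proof
  fix y assume yb: "y \<in> ball v (1/8)"
  have e1: "x1 \<bullet> x1 = 1" using assms(1) by (simp add: dot_square_norm)
  have e2: "x2 \<bullet> x2 = 1" using assms(2) by (simp add: dot_square_norm)
  have s2: "norm (x1 + x2) ^ 2 = 2 + 2 * (x1 \<bullet> x2)"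
    using e1 e2 by (simp add: power2_norm_eq_inner inner_add_left inner_add_right inner_commute)
  have nle: "norm (x1 + x2) \<le> 2" using norm_triangle_ineq[of x1 x2] assms by simp
  have "norm (x1 + x2) ^ 2 > 0" using s2 assms(3) by simp
  hence npos: "norm (x1 + x2) > 0" by (simp add: zero_less_power2)
  have nv: "norm v = 1/2" using npos by (simp add: v_def)
  have hx1: "x1 \<bullet> (x1 + x2) = 1 + x1 \<bullet> x2" using e1 by (simp add: inner_add_right)
  have i1: "x1 \<bullet> v = (1 + x1 \<bullet> x2) / (2 * norm (x1 + x2))" unfolding v_def inner_scaleR_right hx1 by (simp add: field_simps)
  have hx2: "x2 \<bullet> (x1 + x2) = 1 + x1 \<bullet> x2" using e2 by (simp add: inner_add_right inner_commute)
  have i2: "x2 \<bullet> v = (1 + x1 \<bullet> x2) / (2 * norm (x1 + x2))" unfolding v_def inner_scaleR_right hx2 by (simp add: field_simps)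
  have "(1 + x1 \<bullet> x2) / (2 * norm (x1 + x2)) \<ge> 1/4"
    by (subst pos_le_divide_eq) (use npos nle assms(3) in auto)
  hence v1: "x1 \<bullet> v \<ge> 1/4" and v2: "x2 \<bullet> v \<ge> 1/4" using i1 i2 by auto
  have d: "norm (y - v) < 1/8" using yb by (simp add: dist_norm norm_minus_commute)
  have c1: "\<bar>x1 \<bullet> (y - v)\<bar> \<le> norm (y - v)" using Cauchy_Schwarz_ineq2[of x1 "y - v"] assms(1) by simp
  have c2: "\<bar>x2 \<bullet> (y - v)\<bar> \<le> norm (y - v)" using Cauchy_Schwarz_ineq2[of x2 "y - v"] assms(2) by simp
  have a1: "x1 \<bullet> y > 1/8" using c1 d v1 by (simp add: inner_diff_right)
  have a2: "x2 \<bullet> y > 1/8" using c2 d v2 by (simp add: inner_diff_right)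
  have ny: "norm y < 5/8" using norm_triangle_ineq[of v "y - v"] nv d by simp
  have ny0: "y \<noteq> 0" using a1 by auto
  show "y \<in> {y. y \<noteq> 0 \<and> norm y \<le> 1 \<and> sgn (x1 \<bullet> y) = sgn (x2 \<bullet> y) \<and> \<bar>x1 \<bullet> y\<bar> \<ge> (1/5) * norm y \<and> \<bar>x2 \<bullet> y\<bar> \<ge> (1/5) * norm y}"
    using a1 a2 ny ny0 by auto
qed

theorem lemma3p5:
  fixes C C' :: real
  assumes "C > 0" and "C' > 0"
  shows "\<exists>\<beta>>0. \<exists>\<gamma>>0. \<forall>D :: (real ^ 'n) measure. bounded_sphere_distr C C' D \<longrightarrow>
           (\<forall>x1\<in>sphere 0 1. \<forall>x2\<in>sphere 0 1. x1 \<bullet> x2 \<ge> 0 \<longrightarrow>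
              measure D {\<xi> \<in> space D. sgn (x1 \<bullet> \<xi>) = sgn (x2 \<bullet> \<xi>) \<and>
                                       \<bar>x1 \<bullet> \<xi>\<bar> \<ge> \<gamma> \<and> \<bar>x2 \<bullet> \<xi>\<bar> \<ge> \<gamma>} \<ge> \<beta>)"
proof (rule exI[of _ "C * (1/8) ^ DIM(real ^ 'n)"], rule conjI, use assms in simp,
    rule exI[of _ "1/5::real"], rule conjI, simp, intro allI impI ballI)
  fix D :: "(real ^ 'n) measure" and x1 x2 :: "real ^ 'n"
  assume D: "bounded_sphere_distr C C' D" and x1: "x1 \<in> sphere 0 1" and x2: "x2 \<in> sphere 0 1"
    and ip: "x1 \<bullet> x2 \<ge> 0"
  define E where "E = {\<xi> \<in> sphere (0::real^'n) 1. sgn (x1 \<bullet> \<xi>) = sgn (x2 \<bullet> \<xi>) \<and> \<bar>x1 \<bullet> \<xi>\<bar> \<ge> 1/5 \<and> \<bar>x2 \<bullet> \<xi>\<bar> \<ge> 1/5}"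
  have sp: "space D = sphere 0 1" and ss: "sets D = sets (restrict_space borel (sphere (0::real^'n) 1))"
    and bnd: "\<forall>A\<in>sets D. C * unif_sphere A \<le> measure D A"
    using D unfolding bounded_sphere_distr_def by auto
  define K where "K = {y::real^'n. y \<noteq> 0 \<and> norm y \<le> 1 \<and> sgn (x1 \<bullet> y) = sgn (x2 \<bullet> y) \<and> \<bar>x1 \<bullet> y\<bar> \<ge> (1/5) * norm y \<and> \<bar>x2 \<bullet> y\<bar> \<ge> (1/5) * norm y}"
  have Kb: "K \<in> sets lborel"
  proof -
    have "{y \<in> space borel. y \<noteq> (0::real^'n) \<and> norm y \<le> 1 \<and> sgn (x1 \<bullet> y) = sgn (x2 \<bullet> y) \<and> \<bar>x1 \<bullet> y\<bar> \<ge> (1/5) * norm y \<and> \<bar>x2 \<bullet> y\<bar> \<ge> (1/5) * norm y} \<in> sets borel"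
      by measurable
    thus ?thesis unfolding K_def by simp
  qed
  have EK: "E = sphere 0 1 \<inter> K" unfolding E_def K_def by auto
  have Eb: "E \<in> sets borel" unfolding EK
    by (rule sets.Int) (use Kb in auto)
  have cone: "sphere_cone E = K" unfolding E_def K_def by (rule cone_eq) simp
  have ED: "E \<in> sets D" unfolding ss
    by (subst sets_restrict_space_iff) (auto simp: E_def Eb)
  have cf: "cball (0::real^'n) 1 \<in> fmeasurable lborel"
    by (rule fmeasurableI) (use emeasure_lborel_cball_finite[of "0::real^'n" 1] in \<open>auto simp: infinity_ennreal_def\<close>)
  have Kbd: "K \<subseteq> cball 0 1" unfolding K_def by auto
  define v where "v = (x1 + x2) /\<^sub>R (2 * norm (x1 + x2))"
  have bK: "ball v (1/8) \<subseteq> K" unfolding K_def v_def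
    by (rule ball_sub) (use x1 x2 ip in auto)
  have "measure lborel (ball v (1/8)) \<le> measure lborel K"
    by (rule measure_mono_fmeasurable[OF bK]) (auto intro: fmeasurableI2[OF cf Kbd Kb])
  hence "(1/8) ^ DIM(real^'n) * measure lborel (ball (0::real^'n) 1) \<le> measure lborel K"
    using content_ball_conv_unit_ball[of "1/8" v] by simp
  hence "(1/8) ^ DIM(real^'n) \<le> unif_sphere E"
    unfolding unif_sphere_def cone using content_ball_pos[of 1 "0::real^'n"]
    by (simp add: pos_le_divide_eq)
  hence "C * (1/8) ^ DIM(real ^ 'n) \<le> C * unif_sphere E" using assms by simp
  also have "\<dots> \<le> measure D E" using bnd ED by auto
  finally show "C * (1/8) ^ DIM(real ^ 'n) \<le> measure D {\<xi> \<in> space D. sgn (x1 \<bullet> \<xi>) = sgn (x2 \<bullet> \<xi>) \<and>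
                                       \<bar>x1 \<bullet> \<xi>\<bar> \<ge> 1/5 \<and> \<bar>x2 \<bullet> \<xi>\<bar> \<ge> 1/5}"
    unfolding sp E_def .
qed

end
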